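(* Let $(\sigma_n)_{n\ge1}$ be complex numbers with $\liminf_{n\to\infty}(\operatorname{Re}\sigma_{n+1}-\operatorname{Re}\sigma_n)=\gamma>0$. Then for every $\varepsilon\in(0,1)$ and every $T>\frac{2\pi}{\gamma\sqrt{1-\varepsilon}}$ there exists $n_0=n_0(\varepsilon)\in\mathbb{N}$ (independent of $T$) such that for every $n\ge n_0$ $$\sum_{m\ge n_0,\ m\ne n}|K(\sigma_n-\overline{\sigma_m})|+\sum_{m\ge n_0}|K(\sigma_n+\sigma_m)|\le\frac{4\pi}{T\gamma^2(1-\varepsilon)}\Big(1+\sum_{m=n_0}^\infty\frac{1}{4m^2-1}\Big).$$
   Context: For $T>0$ and $w\in\mathbb{C}$ with $T^2w^2\neq\pi^2$, $K(w):=\dfrac{T\pi}{\pi^2-T^2w^2}$. *)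

theory Defs
  imports "HOL-Analysis.Analysis"
begin

text \<open>K(w) = T pi / (pi^2 - T^2 w^2). At the excluded points T^2 w^2 = pi^2
  the value is 0 by Isabelle's division convention (never relevant in the statement).\<close>
definition K :: "real \<Rightarrow> complex \<Rightarrow> complex" where
  "K T w = complex_of_real (T * pi) / (complex_of_real (pi^2) - (complex_of_real T)^2 * w^2)"

end

theory Submission
  imports Defs
begin
lemma tel: "(\<Sum>k=1..N. 1/(4*(real k)^2 - 1)) = real N/(2*real N+1)"
proof (induction N)
  case 0 then show ?case by simp
next
  case (Suc N)
  have e: "4*(real N + 1)^2 - 1 = (2*real N+1)*(2*real N+3)" by (simp add: algebra_simps power2_eq_square)
  have "(\<Sum>k=1..Suc N. 1/(4*(real k)^2 - 1)) = real N/(2*real N+1) + 1/(4*(real N+1)^2-1)"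
    using Suc by simp
  also have "\<dots> = (real N + 1)/(2*(real N+1)+1)"
  proof -
    define a where "a = real N"
    have a: "a \<ge> 0" by (simp add: a_def)
    have p1: "2*a+1 > 0" "2*a+3 > 0" using a by auto
    have "a/(2*a+1) + 1/((2*a+1)*(2*a+3)) = (a*(2*a+3) + 1)/((2*a+1)*(2*a+3))"
    proof -
      have "a/(2*a+1) = a*(2*a+3)/((2*a+1)*(2*a+3))" using p1 by simp
      then show ?thesis by (simp add: add_divide_distrib)
    qed
    also have "a*(2*a+3) + 1 = (a+1)*(2*a+1)" by (simp add: algebra_simps)
    also have "(a+1)*(2*a+1)/((2*a+1)*(2*a+3)) = (a+1)/(2*a+3)" using p1 by simp
    finally have "a/(2*a+1) + 1/(4*(a+1)^2-1) = (a+1)/(2*(a+1)+1)"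
      by (simp add: algebra_simps power2_eq_square)
    thus ?thesis by (simp add: a_def)
  qed
  finally show ?case by simp
qed

lemma Kbound:
  assumes T: "T>0" and g: "g>0" and Tg: "T*g > 2*pi" and k: "k \<ge> 1" and a: "g*k \<le> \<bar>Re w\<bar>"
  shows "cmod (K T w) \<le> 4*pi/(T*g^2*(4*k^2-1))"
proof -
  define a where "a = Re w"
  have d: "complex_of_real (pi^2) - (complex_of_real T)^2 * w^2 = (pi - T*w)*(pi + T*w)"
    by (simp add: algebra_simps power2_eq_square)
  have n1: "cmod (pi - T*w) \<ge> \<bar>pi - T*a\<bar>" using abs_Re_le_cmod[of "pi - T*w"] by (simp add: a_def)
  have n2: "cmod (pi + T*w) \<ge> \<bar>pi + T*a\<bar>" using abs_Re_le_cmod[of "pi + T*w"] by (simp add: a_def)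
  have Ta: "T*\<bar>a\<bar> \<ge> T*g*k" using a T unfolding a_def by (simp add: mult_left_mono)
  have "T*g*k \<ge> T*g" using k T g by simp
  hence big: "T*\<bar>a\<bar> > pi" using Ta Tg pi_gt_zero by linarith
  have prod: "\<bar>pi - T*a\<bar> * \<bar>pi + T*a\<bar> = (T*a)^2 - pi^2"
  proof -
    have "\<bar>pi - T*a\<bar> * \<bar>pi + T*a\<bar> = \<bar>pi^2 - (T*a)^2\<bar>" by (simp add: abs_mult[symmetric] algebra_simps power2_eq_square)
    also have "(T*a)^2 = (T*\<bar>a\<bar>)^2" by (simp add: power_mult_distrib)
    also have "pi^2 < (T*\<bar>a\<bar>)^2" using big pi_gt_zero by (simp add: power_strict_mono)
    hence "\<bar>pi^2 - (T*\<bar>a\<bar>)^2\<bar> = (T*\<bar>a\<bar>)^2 - pi^2" by simp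
    finally show ?thesis by (simp add: power_mult_distrib)
  qed
  have "(T*g*k)^2 \<le> (T*\<bar>a\<bar>)^2" using Ta T g k by (intro power_mono) auto
  hence A: "(T*a)^2 - pi^2 \<ge> (T*g*k)^2 - pi^2" by (simp add: power_mult_distrib)
  have "pi^2 \<le> (T*g/2)^2" using Tg pi_gt_zero by (intro power_mono) auto
  hence B: "(T*g*k)^2 - pi^2 \<ge> T^2*g^2*(4*k^2-1)/4" by (simp add: power_mult_distrib field_simps)
  have pos: "T^2*g^2*(4*k^2-1)/4 > 0" proof - have "k^2 \<ge> 1" using k by (simp add: one_le_power) then show ?thesis using T g by simp qed
  have den: "cmod (complex_of_real (pi^2) - (complex_of_real T)^2 * w^2) \<ge> T^2*g^2*(4*k^2-1)/4"
  proof -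
    have "cmod (complex_of_real (pi^2) - (complex_of_real T)^2 * w^2) = cmod (pi - T*w) * cmod (pi + T*w)"
      unfolding d norm_mult ..
    also have "\<dots> \<ge> \<bar>pi - T*a\<bar> * \<bar>pi + T*a\<bar>" using n1 n2 by (intro mult_mono) auto
    finally show ?thesis using prod A B by linarith
  qed
  have "cmod (K T w) = T*pi / cmod (complex_of_real (pi^2) - (complex_of_real T)^2 * w^2)"
    unfolding K_def norm_divide using T by (simp add: norm_mult)
  also have "\<dots> \<le> T*pi / (T^2*g^2*(4*k^2-1)/4)"
  proof -
    have "cmod (complex_of_real (pi^2) - (complex_of_real T)^2 * w^2) > 0" using den pos by linarith
    then show ?thesis using den pos T by (intro divide_left_mono) auto
  qed
  also have "\<dots> = 4*pi/(T*g^2*(4*k^2-1))" using T pos g by (simp add: field_simps power2_eq_square)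
  finally show ?thesis .
qed

lemma half:
  assumes "finite A" "0 \<notin> A"
  shows "(\<Sum>k\<in>A. 1/(4*(real k)^2-1)) \<le> 1/2"
proof -
  obtain N where N: "A \<subseteq> {..N}" using assms(1) finite_nat_iff_bounded_le by blast
  have sub: "A \<subseteq> {1..N}" using N assms(2) by (force simp: Suc_le_eq subset_iff intro: gr0I)
  have nn: "\<And>k. k \<in> {1..N} \<Longrightarrow> 0 \<le> 1/(4*(real k)^2-1)"
  proof -
    fix k :: nat assume "k \<in> {1..N}"
    hence "real k \<ge> 1" by auto
    hence "(real k)^2 \<ge> 1" by (simp add: one_le_power)
    thus "0 \<le> 1/(4*(real k)^2-1)" by simp
  qed
  have "(\<Sum>k\<in>A. 1/(4*(real k)^2-1)) \<le> (\<Sum>k=1..N. 1/(4*(real k)^2-1))"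
    by (rule sum_mono2) (use sub nn in auto)
  also have "\<dots> = real N/(2*real N+1)" by (rule tel)
  also have "\<dots> \<le> 1/2" by (simp add: field_simps)
  finally show ?thesis .
qed

lemma reidx:
  assumes inj: "inj_on l B" and fin: "finite B" and z: "0 \<notin> l`B"
    and sq: "\<And>m. m\<in>B \<Longrightarrow> (real n - real m)^2 = (real (l m))^2" and C: "C \<ge> 0"
  shows "(\<Sum>m\<in>B. C/(4*(real n - real m)^2-1)) \<le> C/2"
proof -
  have "(\<Sum>m\<in>B. C/(4*(real n - real m)^2-1)) = (\<Sum>m\<in>B. C * (1/(4*(real (l m))^2-1)))"
    using sq by (intro sum.cong) auto
  also have "\<dots> = C * (\<Sum>k\<in>l`B. 1/(4*(real k)^2-1))"
    by (simp add: sum_distrib_left sum.reindex[OF inj])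
  also have "\<dots> \<le> C * (1/2)" using half[of "l`B"] fin z C by (intro mult_left_mono) auto
  finally show ?thesis by simp
qed

theorem lemma5p4:
  fixes \<sigma> :: "nat \<Rightarrow> complex" and \<gamma> :: real
  assumes "\<gamma> > 0"
    and "liminf (\<lambda>n. ereal (Re (\<sigma> (Suc n)) - Re (\<sigma> n))) = ereal \<gamma>"
  shows "\<forall>\<epsilon>. 0 < \<epsilon> \<and> \<epsilon> < 1 \<longrightarrow>
    (\<exists>n0::nat. n0 \<ge> 1 \<and>
      (\<forall>T::real. T > 2 * pi / (\<gamma> * sqrt (1 - \<epsilon>)) \<longrightarrow>
        (\<forall>n\<ge>n0.
          summable (\<lambda>m. if n0 \<le> m \<and> m \<noteq> n then cmod (K T (\<sigma> n - cnj (\<sigma> m))) else 0) \<and>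
          summable (\<lambda>m. if n0 \<le> m then cmod (K T (\<sigma> n + \<sigma> m)) else 0) \<and>
          (\<Sum>m. if n0 \<le> m \<and> m \<noteq> n then cmod (K T (\<sigma> n - cnj (\<sigma> m))) else 0)
          + (\<Sum>m. if n0 \<le> m then cmod (K T (\<sigma> n + \<sigma> m)) else 0)
          \<le> 4 * pi / (T * \<gamma>^2 * (1 - \<epsilon>)) *
             (1 + (\<Sum>m. 1 / (4 * (real (m + n0))^2 - 1))))))"
proof (intro allI impI)
  fix \<epsilon> :: real assume \<epsilon>: "0 < \<epsilon> \<and> \<epsilon> < 1"
  define g where "g = \<gamma> * sqrt (1 - \<epsilon>)"
  have s1: "sqrt (1-\<epsilon>) < 1" "sqrt (1-\<epsilon>) > 0" using \<epsilon> by auto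
  have g0: "g > 0" using s1 assms(1) by (simp add: g_def)
  have g1: "g < \<gamma>" using s1 assms(1) by (simp add: g_def)
  have g2: "g^2 = \<gamma>^2 * (1-\<epsilon>)" using \<epsilon> by (simp add: g_def power_mult_distrib)
  define h where "h = (g + \<gamma>)/2"
  have h: "g < h" "h < \<gamma>" using g1 by (auto simp: h_def)
  define x where "x n = Re (\<sigma> n)" for n
  have "ereal h < liminf (\<lambda>n. ereal (Re (\<sigma> (Suc n)) - Re (\<sigma> n)))" using assms(2) h by simp
  from less_LiminfD[OF this] obtain N where N: "\<And>n. n \<ge> N \<Longrightarrow> x (Suc n) - x n > h"
    unfolding eventually_sequentially x_def by auto
  have lin: "x m \<ge> x N + h*(real m - real N)" if "m \<ge> N" for m
    using that
  proof (induction m rule: dec_induct)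
    case base then show ?case by simp
  next
    case (step m) then show ?case using N[of m] by (simp add: algebra_simps)
  qed
  obtain M0 :: nat where M0: "(h*N - x N)/(h-g) < M0" using reals_Archimedean2 by blast
  define n0 where "n0 = max M0 (max N 1)"
  have n0: "n0 \<ge> 1" "n0 \<ge> N" "n0 \<ge> M0" by (auto simp: n0_def)
  have "(h*N - x N) < (h-g)*M0" using M0 h by (simp add: divide_less_eq mult.commute)
  also have "\<dots> \<le> (h-g)*n0" using h n0 by (intro mult_left_mono) auto
  finally have base0: "x n0 \<ge> g*n0" using lin[OF n0(2)] by (simp add: algebra_simps)
  have P2: "x m \<ge> g*m" if "m \<ge> n0" for m
    using that
  proof (induction m rule: dec_induct)
    case base then show ?case using base0 by simp
  next
    case (step m) then show ?case using N[of m] n0 h by (simp add: algebra_simps)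
  qed
  have P3: "x n - x m \<ge> g*(real n - real m)" if "n0 \<le> m" "m \<le> n" for m n
    using that(2)
  proof (induction n rule: dec_induct)
    case base then show ?case by simp
  next
    case (step k) then show ?case using N[of k] n0 that h by (simp add: algebra_simps)
  qed
  have main: "summable (\<lambda>m. if n0 \<le> m \<and> m \<noteq> n then cmod (K T (\<sigma> n - cnj (\<sigma> m))) else 0) \<and>
          summable (\<lambda>m. if n0 \<le> m then cmod (K T (\<sigma> n + \<sigma> m)) else 0) \<and>
          (\<Sum>m. if n0 \<le> m \<and> m \<noteq> n then cmod (K T (\<sigma> n - cnj (\<sigma> m))) else 0)
          + (\<Sum>m. if n0 \<le> m then cmod (K T (\<sigma> n + \<sigma> m)) else 0)
          \<le> 4 * pi / (T * \<gamma>^2 * (1 - \<epsilon>)) *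
             (1 + (\<Sum>m. 1 / (4 * (real (m + n0))^2 - 1)))"
    if T: "T > 2 * pi / (\<gamma> * sqrt (1 - \<epsilon>))" and n: "n0 \<le> n" for T n
  proof -
    have Tg: "T*g > 2*pi" using T g0 unfolding g_def[symmetric] by (simp add: divide_less_eq mult.commute)
    have T0: "T > 0" using Tg g0 pi_gt_zero by (smt (verit) mult_nonpos_nonneg)
    define C where "C = 4*pi/(T*g^2)"
    have C0: "C > 0" using T0 g0 by (simp add: C_def)
    have CC: "4 * pi / (T * \<gamma>^2 * (1 - \<epsilon>)) = C" unfolding C_def g2 by (simp add: mult.assoc)
    have B1: "cmod (K T (\<sigma> n - cnj (\<sigma> m))) \<le> C/(4*(real n - real m)^2-1)" if "n0 \<le> m" "m \<noteq> n" for m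
    proof -
      define k where "k = \<bar>real n - real m\<bar>"
      have k1: "k \<ge> 1" using that by (cases "m < n") (auto simp: k_def)
      have re: "Re (\<sigma> n - cnj (\<sigma> m)) = x n - x m" by (simp add: x_def)
      have gk: "g*k \<le> \<bar>Re (\<sigma> n - cnj (\<sigma> m))\<bar>"
      proof (cases "m \<le> n")
        case True then show ?thesis using P3[OF that(1) True] re by (simp add: k_def)
      next
        case False
        hence "x m - x n \<ge> g*(real m - real n)" using P3[OF n] by simp
        then show ?thesis using False re by (simp add: k_def)
      qed
      have "cmod (K T (\<sigma> n - cnj (\<sigma> m))) \<le> 4*pi/(T*g^2*(4*k^2-1))"
        by (rule Kbound[OF T0 g0 Tg k1 gk])
      also have "k^2 = (real n - real m)^2" by (simp add: k_def)
      finally show ?thesis by (simp add: C_def)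
    qed
    have B2: "cmod (K T (\<sigma> n + \<sigma> m)) \<le> C/(4*(real m)^2-1)" if "n0 \<le> m" for m
    proof -
      have k1: "real m \<ge> 1" using that n0 by simp
      have "x n \<ge> 0" using P2[OF n] g0 by (smt (verit) of_nat_0_le_iff zero_le_mult_iff)
      hence gk: "g * real m \<le> \<bar>Re (\<sigma> n + \<sigma> m)\<bar>" using P2[OF that] by (simp add: x_def)
      have "cmod (K T (\<sigma> n + \<sigma> m)) \<le> 4*pi/(T*g^2*(4*(real m)^2-1))"
        by (rule Kbound[OF T0 g0 Tg k1 gk])
      thus ?thesis by (simp add: C_def)
    qed
    define f1 where "f1 = (\<lambda>m. if n0 \<le> m \<and> m \<noteq> n then cmod (K T (\<sigma> n - cnj (\<sigma> m))) else 0)"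
    define f2 where "f2 = (\<lambda>m. if n0 \<le> m then cmod (K T (\<sigma> n + \<sigma> m)) else 0)"
    define d where "d m = C/(4*(real n - real m)^2-1)" for m
    have d0: "d m \<ge> 0" if "m \<noteq> n" for m
    proof -
      have "\<bar>real n - real m\<bar> \<ge> 1" using that by (cases "m < n") auto
      hence "(real n - real m)^2 \<ge> 1" by (metis abs_le_square_iff abs_one one_power2)
      thus ?thesis using C0 by (simp add: d_def)
    qed
    have f1nn: "f1 m \<ge> 0" for m by (simp add: f1_def)
    have f2nn: "f2 m \<ge> 0" for m by (simp add: f2_def)
    have part1: "(\<Sum>m<M. f1 m) \<le> C" for M
    proof -
      have "(\<Sum>m<M. f1 m) \<le> (\<Sum>m<M. (if m < n then d m else 0) + (if n < m then d m else 0))"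
        using B1 d0 by (intro sum_mono) (auto simp: f1_def d_def)
      also have "\<dots> = (\<Sum>m\<in>{m\<in>{..<M}. m < n}. d m) + (\<Sum>m\<in>{m\<in>{..<M}. n < m}. d m)"
        by (simp only: sum.distrib sum.inter_filter[OF finite_lessThan])
      also have "(\<Sum>m\<in>{m\<in>{..<M}. m < n}. d m) \<le> C/2"
        unfolding d_def by (rule reidx[where l="\<lambda>m. n - m"]) (use C0 in \<open>auto simp: inj_on_def of_nat_diff\<close>)
      also have "(\<Sum>m\<in>{m\<in>{..<M}. n < m}. d m) \<le> C/2"
        unfolding d_def by (rule reidx[where l="\<lambda>m. m - n"]) (use C0 in \<open>auto simp: inj_on_def of_nat_diff power2_commute\<close>)
      finally show ?thesis by simp
    qed
    have sum1: "summable f1" by (rule summableI_nonneg_bounded[OF f1nn part1])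
    have le1: "suminf f1 \<le> C" by (rule suminf_le_const[OF sum1 part1])
    define b where "b m = 1/(4*(real (m+n0))^2-1)" for m
    have b0: "b m \<ge> 0" for m
    proof -
      have "real (m+n0) \<ge> 1" using n0 by simp
      hence "(real (m+n0))^2 \<ge> 1" by (simp add: one_le_power)
      thus ?thesis by (simp add: b_def)
    qed
    have partb: "(\<Sum>m<M. b m) \<le> 1/2" for M
    proof -
      have "(\<Sum>m<M. b m) = (\<Sum>k\<in>(\<lambda>m. m+n0)`{..<M}. 1/(4*(real k)^2-1))"
        by (simp add: sum.reindex b_def)
      also have "\<dots> \<le> 1/2" by (rule half) (use n0 in auto)
      finally show ?thesis .
    qed
    have sumb: "summable b" by (rule summableI_nonneg_bounded[OF b0 partb])
    have f2b: "f2 (m+n0) \<le> C * b m" for m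
      using B2[of "m+n0"] by (simp add: f2_def b_def)
    have sum2s: "summable (\<lambda>m. f2 (m+n0))"
      by (rule summable_comparison_test'[where g="\<lambda>m. C * b m" and N=0])
         (use sumb f2b f2nn in \<open>auto intro: summable_mult\<close>)
    have "(\<lambda>m. f2 (m+n0)) sums (suminf (\<lambda>m. f2 (m+n0)))" using sum2s by (rule summable_sums)
    hence sums2: "f2 sums (suminf (\<lambda>m. f2 (m+n0)))"
      by (subst (asm) sums_zero_iff_shift) (auto simp: f2_def)
    have sum2: "summable f2" using sums2 by (rule sums_summable)
    have "suminf f2 = suminf (\<lambda>m. f2 (m+n0))" using sums2 by (rule sums_unique[symmetric])
    also have "\<dots> \<le> suminf (\<lambda>m. C * b m)"
      by (rule suminf_le) (use f2b sum2s sumb in \<open>auto intro: summable_mult\<close>)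
    also have "\<dots> = C * suminf b" by (rule suminf_mult[OF sumb])
    finally have le2: "suminf f2 \<le> C * suminf b" .
    have "suminf f1 + suminf f2 \<le> C * (1 + suminf b)" using le1 le2 by (simp add: algebra_simps)
    then show ?thesis using sum1 sum2 unfolding CC f1_def f2_def b_def by simp
  qed
  show "\<exists>n0::nat. n0 \<ge> 1 \<and>
      (\<forall>T::real. T > 2 * pi / (\<gamma> * sqrt (1 - \<epsilon>)) \<longrightarrow>
        (\<forall>n\<ge>n0.
          summable (\<lambda>m. if n0 \<le> m \<and> m \<noteq> n then cmod (K T (\<sigma> n - cnj (\<sigma> m))) else 0) \<and>
          summable (\<lambda>m. if n0 \<le> m then cmod (K T (\<sigma> n + \<sigma> m)) else 0) \<and>
          (\<Sum>m. if n0 \<le> m \<and> m \<noteq> n then cmod (K T (\<sigma> n - cnj (\<sigma> m))) else 0)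
          + (\<Sum>m. if n0 \<le> m then cmod (K T (\<sigma> n + \<sigma> m)) else 0)
          \<le> 4 * pi / (T * \<gamma>^2 * (1 - \<epsilon>)) *
             (1 + (\<Sum>m. 1 / (4 * (real (m + n0))^2 - 1)))))"
    using main n0(1) by blast
qed
end
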